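(* Let $G$ be a Polish group. If $G$ is locally strongly bounded, then every coarsely bounded subset of $G$ is strongly bounded.
   Context: A topological group is Polish if it is separable and completely metrizable. A subset of a topological group $G$ is coarsely bounded if it has finite diameter in every continuous left-invariant metric on $G$. A subset of $G$ is strongly bounded if it has finite diameter in every left-invariant metric on $G$ (not necessarily continuous). $G$ is locally strongly bounded if some open neighborhood of the identity is strongly bounded. *)

theory Defs
  imports "HOL-Analysis.Analysis" "HOL-Algebra.Group"
begin

definition topological_group :: "('a, 'b) monoid_scheme \<Rightarrow> 'a topology \<Rightarrow> bool" where
  "topological_group G T \<longleftrightarrow>
     group G \<and> topspace T = carrier G \<and>
     continuous_map (prod_topology T T) T (\<lambda>(x, y). x \<otimes>\<^bsub>G\<^esub> y) \<and>
     continuous_map T T (\<lambda>x. inv\<^bsub>G\<^esub> x)"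

definition polish_group :: "('a, 'b) monoid_scheme \<Rightarrow> 'a topology \<Rightarrow> bool" where
  "polish_group G T \<longleftrightarrow>
     topological_group G T \<and> separable_space T \<and> completely_metrizable_space T"

definition left_invariant_metric :: "('a, 'b) monoid_scheme \<Rightarrow> ('a \<Rightarrow> 'a \<Rightarrow> real) \<Rightarrow> bool" where
  "left_invariant_metric G d \<longleftrightarrow>
     Metric_space (carrier G) d \<and>
     (\<forall>g\<in>carrier G. \<forall>x\<in>carrier G. \<forall>y\<in>carrier G. d (g \<otimes>\<^bsub>G\<^esub> x) (g \<otimes>\<^bsub>G\<^esub> y) = d x y)"

definition continuous_left_invariant_metric ::
    "('a, 'b) monoid_scheme \<Rightarrow> 'a topology \<Rightarrow> ('a \<Rightarrow> 'a \<Rightarrow> real) \<Rightarrow> bool" where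
  "continuous_left_invariant_metric G T d \<longleftrightarrow>
     left_invariant_metric G d \<and>
     continuous_map (prod_topology T T) euclideanreal (\<lambda>(x, y). d x y)"

definition finite_diameter :: "('a \<Rightarrow> 'a \<Rightarrow> real) \<Rightarrow> 'a set \<Rightarrow> bool" where
  "finite_diameter d A \<longleftrightarrow> (\<exists>B. \<forall>x\<in>A. \<forall>y\<in>A. d x y \<le> B)"

definition coarsely_bounded :: "('a, 'b) monoid_scheme \<Rightarrow> 'a topology \<Rightarrow> 'a set \<Rightarrow> bool" where
  "coarsely_bounded G T A \<longleftrightarrow> A \<subseteq> carrier G \<and>
     (\<forall>d. continuous_left_invariant_metric G T d \<longrightarrow> finite_diameter d A)"

definition strongly_bounded :: "('a, 'b) monoid_scheme \<Rightarrow> 'a set \<Rightarrow> bool" where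
  "strongly_bounded G A \<longleftrightarrow> A \<subseteq> carrier G \<and>
     (\<forall>d. left_invariant_metric G d \<longrightarrow> finite_diameter d A)"

definition locally_strongly_bounded :: "('a, 'b) monoid_scheme \<Rightarrow> 'a topology \<Rightarrow> bool" where
  "locally_strongly_bounded G T \<longleftrightarrow>
     (\<exists>U. openin T U \<and> \<one>\<^bsub>G\<^esub> \<in> U \<and> strongly_bounded G U)"

end

theory Submission
  imports Defs
begin


lemma int_threshold:
  fixes P :: "int \<Rightarrow> bool"
  assumes "P a" "\<not> P b" "\<And>m n. m \<le> n \<Longrightarrow> P n \<Longrightarrow> P m"
  shows "\<exists>m. P m \<and> \<not> P (m+1)"
proof (rule ccontr)
  assume "\<not> ?thesis"
  then have st: "\<And>m. P m \<Longrightarrow> P (m+1)" by blast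
  have "\<And>k::nat. P (a + int k)"
  proof -
    fix k :: nat show "P (a + int k)"
    proof (induction k)
      case 0 then show ?case using assms(1) by simp
    next
      case (Suc k) then show ?case using st[of "a + int k"] by (simp add: add_ac)
    qed
  qed
  then have "P (a + int (nat (b - a)))" .
  then have "P b" using assms(3)[of b "a + int (nat (b - a))"] by simp
  with assms(2) show False by simp
qed

lemma list_split_half:
  fixes ys :: "real list"
  assumes "\<forall>x\<in>set ys. x \<ge> 0" "ys \<noteq> []"
  shows "\<exists>k<length ys. sum_list (take k ys) \<le> sum_list ys / 2 \<and> sum_list (drop (Suc k) ys) \<le> sum_list ys / 2"
proof -
  define S where "S = sum_list ys"
  have nn: "\<And>zs. set zs \<subseteq> set ys \<Longrightarrow> sum_list zs \<ge> 0" using assms(1)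
    by (metis subsetD sum_list_nonneg)
  have td: "\<And>i. sum_list (take i ys) + sum_list (drop i ys) = S"
    unfolding S_def by (metis append_take_drop_id sum_list_append)
  have dn: "\<And>i. sum_list (drop i ys) \<ge> 0" by (rule nn) (meson set_drop_subset)
  have tn: "\<And>i. sum_list (take i ys) \<ge> 0" by (rule nn) (meson set_take_subset)
  show ?thesis
  proof (cases "\<exists>j. sum_list (take (Suc j) ys) > S / 2")
    case False
    then have "sum_list (take (Suc (length ys)) ys) \<le> S/2" by (meson not_less)
    then have "S \<le> S/2" unfolding S_def by simp
    then have S0: "S = 0" using nn[of ys] S_def by simp
    show ?thesis
      apply (rule exI[of _ 0]) using assms(2) S0 td[of 1] tn[of 1] dn[of 1] S_def by auto
  next
    case True
    define k where "k = (LEAST j. sum_list (take (Suc j) ys) > S / 2)"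
    have k1: "sum_list (take (Suc k) ys) > S/2" unfolding k_def using True by (metis LeastI_ex)
    have k2: "sum_list (take k ys) \<le> S/2"
    proof (cases k)
      case 0 then show ?thesis using nn[of ys] S_def by simp
    next
      case (Suc k')
      then have "k' < k" by simp
      then have "\<not> sum_list (take (Suc k') ys) > S/2" unfolding k_def by (rule not_less_Least)
      then show ?thesis using Suc by simp
    qed
    have klt: "k < length ys"
    proof (rule ccontr)
      assume "\<not> k < length ys"
      then have "take k ys = ys" "take (Suc k) ys = ys" by auto
      then show False using k1 k2 by simp
    qed
    have "sum_list (drop (Suc k) ys) \<le> S/2" using td[of "Suc k"] k1 by simp
    then show ?thesis using klt k2 S_def by blast
  qed
qed



locale bk_levels = group G for G (structure) +
  fixes L :: "int \<Rightarrow> 'a set"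
  assumes L_sub: "L n \<subseteq> carrier G"
    and L_one: "\<one> \<in> L n"
    and L_cube: "a \<in> L (n+1) \<Longrightarrow> b \<in> L (n+1) \<Longrightarrow> c \<in> L (n+1) \<Longrightarrow> a \<otimes> b \<otimes> c \<in> L n"
    and L_cover: "g \<in> carrier G \<Longrightarrow> \<exists>n. g \<in> L n"
    and L_sep: "g \<in> carrier G \<Longrightarrow> (\<forall>n. g \<in> L n) \<Longrightarrow> g = \<one>"
begin

lemma L_step: "L (n+1) \<subseteq> L n"
proof
  fix a assume a: "a \<in> L (n+1)"
  have "a \<otimes> \<one> \<otimes> \<one> \<in> L n" by (rule L_cube[OF a L_one L_one])
  moreover have "a \<in> carrier G" using a L_sub by blast
  ultimately show "a \<in> L n" by simp
qed

lemma L_mono: assumes "m \<le> n" shows "L n \<subseteq> L m"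
proof -
  have "\<And>k::nat. L (m + int k) \<subseteq> L m"
  proof -
    fix k :: nat show "L (m + int k) \<subseteq> L m"
    proof (induction k)
      case 0 then show ?case by simp
    next
      case (Suc k) then show ?case using L_step[of "m + int k"] by (simp add: add_ac)
    qed
  qed
  from this[of "nat (n - m)"] show ?thesis using assms by simp
qed

definition psi :: "'a \<Rightarrow> real" where
  "psi g = (if \<forall>n. g \<in> L n then 0 else 2 powr (- real_of_int (SOME m. g \<in> L m \<and> g \<notin> L (m+1))))"

lemma psi_nonneg: "psi g \<ge> 0"
  unfolding psi_def by auto

lemma psi_cases: "psi g = 0 \<or> (\<exists>m::int. psi g = 2 powr (- real_of_int m))"
  unfolding psi_def by auto

lemma psi_le_iff:
  assumes g: "g \<in> carrier G"
  shows "psi g \<le> 2 powr (- real_of_int n) \<longleftrightarrow> g \<in> L n"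
proof (cases "\<forall>n. g \<in> L n")
  case True then show ?thesis unfolding psi_def by simp
next
  case False
  then obtain b where b: "g \<notin> L b" by blast
  obtain a where a: "g \<in> L a" using L_cover[OF g] by blast
  have "\<exists>m. g \<in> L m \<and> g \<notin> L (m+1)"
    by (rule int_threshold[of "\<lambda>n. g \<in> L n", OF a b]) (use L_mono in blast)
  define mm where "mm = (SOME m. g \<in> L m \<and> g \<notin> L (m+1))"
  have m: "g \<in> L mm \<and> g \<notin> L (mm+1)" unfolding mm_def by (rule someI_ex) fact
  have iff: "g \<in> L n \<longleftrightarrow> n \<le> mm"
  proof
    assume "g \<in> L n"
    show "n \<le> mm"
    proof (rule ccontr)
      assume "\<not> n \<le> mm"
      then have "mm + 1 \<le> n" by simp
      then have "L n \<subseteq> L (mm+1)" by (rule L_mono)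
      then show False using m \<open>g \<in> L n\<close> by blast
    qed
  next
    assume "n \<le> mm" then show "g \<in> L n" using m L_mono by blast
  qed
  have "psi g = 2 powr (- real_of_int mm)" unfolding psi_def mm_def using False by simp
  then show ?thesis using iff by simp
qed

lemma psi_zero: assumes "g \<in> carrier G" "psi g = 0" shows "g = \<one>"
proof -
  have "\<forall>n. g \<in> L n"
  proof
    fix n show "g \<in> L n" using psi_le_iff[OF assms(1), of n] assms(2) by simp
  qed
  then show ?thesis using L_sep assms(1) by blast
qed

lemma psi_one: "psi \<one> = 0"
  unfolding psi_def using L_one by simp

lemma psi_3:
  assumes x: "x \<in> carrier G" and y: "y \<in> carrier G" and z: "z \<in> carrier G"
  shows "psi (x \<otimes> y \<otimes> z) \<le> 2 * max (psi x) (max (psi y) (psi z))"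
proof -
  define M where "M = max (psi x) (max (psi y) (psi z))"
  have Min: "M = psi x \<or> M = psi y \<or> M = psi z" unfolding M_def by linarith
  have le: "psi x \<le> M" "psi y \<le> M" "psi z \<le> M" unfolding M_def by auto
  have "M = 0 \<or> (\<exists>m::int. M = 2 powr (- real_of_int m))" using Min psi_cases by metis
  then have "psi (x \<otimes> y \<otimes> z) \<le> 2 * M"
  proof
    assume "M = 0"
    then have "x = \<one>" "y = \<one>" "z = \<one>" using le psi_nonneg psi_zero x y z by (metis order.antisym)+
    then show "psi (x \<otimes> y \<otimes> z) \<le> 2 * M" using psi_one \<open>M = 0\<close> by simp
  next
    assume "\<exists>m::int. M = 2 powr (- real_of_int m)"
    then obtain m :: int where m: "M = 2 powr (- real_of_int m)" by blast
    have "x \<in> L ((m - 1) + 1)" "y \<in> L ((m - 1) + 1)" "z \<in> L ((m - 1) + 1)"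
      using psi_le_iff x y z le m by auto
    then have "x \<otimes> y \<otimes> z \<in> L (m - 1)" by (rule L_cube)
    moreover have cl: "x \<otimes> y \<otimes> z \<in> carrier G" using x y z by simp
    ultimately have "psi (x \<otimes> y \<otimes> z) \<le> 2 powr (- real_of_int (m - 1))"
      using psi_le_iff[OF cl, of "m - 1"] by blast
    also have "\<dots> = 2 * M" unfolding m
      using powr_add[of 2 1 "- real_of_int m"] by simp
    finally show "psi (x \<otimes> y \<otimes> z) \<le> 2 * M" .
  qed
  then show ?thesis unfolding M_def .
qed

definition prodl :: "'a list \<Rightarrow> 'a" where
  "prodl xs = foldr (\<lambda>x y. x \<otimes> y) xs \<one>"

lemma prodl_simps [simp]: "prodl [] = \<one>" "prodl (x # xs) = x \<otimes> prodl xs"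
  unfolding prodl_def by simp_all

lemma prodl_closed [simp]: "set xs \<subseteq> carrier G \<Longrightarrow> prodl xs \<in> carrier G"
  by (induction xs) auto

lemma prodl_append: "set xs \<subseteq> carrier G \<Longrightarrow> set ys \<subseteq> carrier G \<Longrightarrow> prodl (xs @ ys) = prodl xs \<otimes> prodl ys"
  by (induction xs) (auto simp: m_assoc)

lemma chain_lemma:
  "set xs \<subseteq> carrier G \<Longrightarrow> psi (prodl xs) \<le> 2 * sum_list (map psi xs)"
proof (induction "length xs" arbitrary: xs rule: less_induct)
  case less
  show ?case
  proof (cases "xs = []")
    case True then show ?thesis using psi_one by simp
  next
    case False
    define S where "S = sum_list (map psi xs)"
    have "\<exists>k<length (map psi xs). sum_list (take k (map psi xs)) \<le> sum_list (map psi xs) / 2 \<and>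
       sum_list (drop (Suc k) (map psi xs)) \<le> sum_list (map psi xs) / 2"
      by (rule list_split_half) (use False psi_nonneg in auto)
    then obtain k where k: "k < length xs" "sum_list (map psi (take k xs)) \<le> S/2"
       "sum_list (map psi (drop (Suc k) xs)) \<le> S/2"
      unfolding S_def by (auto simp: take_map drop_map)
    have xs: "xs = take k xs @ [xs ! k] @ drop (Suc k) xs" using k(1) by (simp add: id_take_nth_drop)
    have c1: "set (take k xs) \<subseteq> carrier G" using less.prems by (meson order_trans set_take_subset)
    have c2: "set (drop (Suc k) xs) \<subseteq> carrier G" using less.prems by (meson order_trans set_drop_subset)
    have c3: "xs ! k \<in> carrier G" using less.prems k(1) by (meson nth_mem subsetD)
    have "prodl xs = prodl (take k xs) \<otimes> (xs ! k) \<otimes> prodl (drop (Suc k) xs)"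
      apply (subst xs) using c1 c2 c3 by (simp add: prodl_append m_assoc)
    then have "psi (prodl xs) \<le> 2 * max (psi (prodl (take k xs))) (max (psi (xs!k)) (psi (prodl (drop (Suc k) xs))))"
      using psi_3 c1 c2 c3 by simp
    moreover have "psi (prodl (take k xs)) \<le> S"
      using less.hyps[of "take k xs"] k c1 by simp
    moreover have "psi (prodl (drop (Suc k) xs)) \<le> S"
    proof -
      have "length (drop (Suc k) xs) < length xs" using k(1) by simp
      then show ?thesis using less.hyps[of "drop (Suc k) xs"] k c2 by simp
    qed
    moreover have "psi (xs ! k) \<le> S"
    proof -
      have "sum_list (map psi xs) = sum_list (map psi (take k xs)) + psi (xs!k) + sum_list (map psi (drop (Suc k) xs))"
        by (subst xs) simp
      moreover have "sum_list (map psi (take k xs)) \<ge> 0" "sum_list (map psi (drop (Suc k) xs)) \<ge> 0"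
        by (auto intro!: sum_list_nonneg simp: psi_nonneg)
      ultimately show ?thesis unfolding S_def by linarith
    qed
    ultimately show ?thesis unfolding S_def by simp
  qed
qed


definition NN :: "'a \<Rightarrow> real" where
  "NN g = Inf {sum_list (map psi xs) | xs. set xs \<subseteq> carrier G \<and> prodl xs = g}"

lemma NN_set_ne: "g \<in> carrier G \<Longrightarrow> {sum_list (map psi xs) | xs. set xs \<subseteq> carrier G \<and> prodl xs = g} \<noteq> {}"
  by (rule ccontr) (auto dest: spec[of _ "[g]"])

lemma NN_set_bdd: "bdd_below {sum_list (map psi xs) | xs. set xs \<subseteq> carrier G \<and> prodl xs = g}"
  by (rule bdd_belowI[of _ 0]) (auto intro!: sum_list_nonneg simp: psi_nonneg)

lemma NN_le: "set xs \<subseteq> carrier G \<Longrightarrow> NN (prodl xs) \<le> sum_list (map psi xs)"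
  unfolding NN_def by (rule cInf_lower[OF _ NN_set_bdd]) blast

lemma NN_le_psi: "g \<in> carrier G \<Longrightarrow> NN g \<le> psi g"
  using NN_le[of "[g]"] by simp

lemma psi_le_NN: assumes g: "g \<in> carrier G" shows "psi g \<le> 2 * NN g"
proof -
  have "psi g / 2 \<le> NN g" unfolding NN_def
  proof (rule cInf_greatest[OF NN_set_ne[OF g]])
    fix s assume "s \<in> {sum_list (map psi xs) | xs. set xs \<subseteq> carrier G \<and> prodl xs = g}"
    then obtain xs where "set xs \<subseteq> carrier G" "prodl xs = g" "s = sum_list (map psi xs)" by blast
    then show "psi g / 2 \<le> s" using chain_lemma[of xs] by simp
  qed
  then show ?thesis by simp
qed

lemma NN_nonneg: "g \<in> carrier G \<Longrightarrow> NN g \<ge> 0"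
  using psi_le_NN[of g] psi_nonneg[of g] by simp

lemma NN_one: "NN \<one> = 0"
  using NN_le_psi[of \<one>] psi_one NN_nonneg[of \<one>] by simp

lemma NN_mult: assumes g: "g \<in> carrier G" and h: "h \<in> carrier G"
  shows "NN (g \<otimes> h) \<le> NN g + NN h"
proof -
  have "NN (g \<otimes> h) - NN g \<le> NN h" unfolding NN_def[of h]
  proof (rule cInf_greatest[OF NN_set_ne[OF h]])
    fix s2 assume "s2 \<in> {sum_list (map psi xs) | xs. set xs \<subseteq> carrier G \<and> prodl xs = h}"
    then obtain ys where ys: "set ys \<subseteq> carrier G" "prodl ys = h" "s2 = sum_list (map psi ys)" by blast
    have "NN (g \<otimes> h) - s2 \<le> NN g" unfolding NN_def[of g]
    proof (rule cInf_greatest[OF NN_set_ne[OF g]])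
      fix s1 assume "s1 \<in> {sum_list (map psi xs) | xs. set xs \<subseteq> carrier G \<and> prodl xs = g}"
      then obtain xs where xs: "set xs \<subseteq> carrier G" "prodl xs = g" "s1 = sum_list (map psi xs)" by blast
      have "NN (prodl (xs @ ys)) \<le> sum_list (map psi (xs @ ys))" using xs ys by (intro NN_le) auto
      moreover have "prodl (xs @ ys) = g \<otimes> h" using xs ys by (simp add: prodl_append)
      ultimately show "NN (g \<otimes> h) - s2 \<le> s1" using xs ys by simp
    qed
    then show "NN (g \<otimes> h) - NN g \<le> s2" by simp
  qed
  then show ?thesis by simp
qed

definition dd :: "'a \<Rightarrow> 'a \<Rightarrow> real" where
  "dd x y = (if x \<in> carrier G \<and> y \<in> carrier G then NN (inv x \<otimes> y) + NN (inv y \<otimes> x) else 0)"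

lemma dd_metric: "Metric_space (carrier G) dd"
proof
  fix x y show "0 \<le> dd x y" unfolding dd_def by (auto intro!: add_nonneg_nonneg NN_nonneg)
  show "dd x y = dd y x" unfolding dd_def by auto
next
  fix x y assume x: "x \<in> carrier G" and y: "y \<in> carrier G"
  show "dd x y = 0 \<longleftrightarrow> x = y"
  proof
    assume "dd x y = 0"
    then have "NN (inv x \<otimes> y) = 0" using x y NN_nonneg[of "inv x \<otimes> y"] NN_nonneg[of "inv y \<otimes> x"]
      unfolding dd_def by simp
    then have "psi (inv x \<otimes> y) = 0" using psi_le_NN[of "inv x \<otimes> y"] psi_nonneg[of "inv x \<otimes> y"] x y by simp
    then have "inv x \<otimes> y = \<one>" using psi_zero x y by simp
    then show "x = y" using x y by (metis inv_equality inv_inv l_inv_ex r_inv)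
  next
    assume "x = y" then show "dd x y = 0" unfolding dd_def using x by (simp add: NN_one)
  qed
next
  fix x y z assume x: "x \<in> carrier G" and y: "y \<in> carrier G" and z: "z \<in> carrier G"
  have e1: "inv x \<otimes> z = (inv x \<otimes> y) \<otimes> (inv y \<otimes> z)" using x y z
    by (simp add: m_assoc[symmetric]) (simp add: m_assoc)
  have e2: "inv z \<otimes> x = (inv z \<otimes> y) \<otimes> (inv y \<otimes> x)" using x y z
    by (simp add: m_assoc[symmetric]) (simp add: m_assoc)
  show "dd x z \<le> dd x y + dd y z" unfolding dd_def using x y z
    NN_mult[of "inv x \<otimes> y" "inv y \<otimes> z"] NN_mult[of "inv z \<otimes> y" "inv y \<otimes> x"] e1 e2 by simp
qed

lemma dd_left_inv: "g \<in> carrier G \<Longrightarrow> x \<in> carrier G \<Longrightarrow> y \<in> carrier G \<Longrightarrow> dd (g \<otimes> x) (g \<otimes> y) = dd x y"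
  unfolding dd_def by (simp add: inv_mult_group m_assoc[symmetric]) (simp add: m_assoc)

lemma psi_le_dd: "x \<in> carrier G \<Longrightarrow> y \<in> carrier G \<Longrightarrow> psi (inv x \<otimes> y) \<le> 2 * dd x y"
  unfolding dd_def using psi_le_NN[of "inv x \<otimes> y"] NN_nonneg[of "inv y \<otimes> x"] by simp

lemma NN_cont: assumes g0: "g0 \<in> carrier G" "g \<in> carrier G"
  shows "\<bar>NN g - NN g0\<bar> \<le> max (psi (inv g0 \<otimes> g)) (psi (inv g \<otimes> g0))"
proof -
  have "NN g \<le> NN g0 + NN (inv g0 \<otimes> g)" using NN_mult[of g0 "inv g0 \<otimes> g"] assms
    by (simp add: m_assoc[symmetric])
  moreover have "NN g0 \<le> NN g + NN (inv g \<otimes> g0)" using NN_mult[of g "inv g \<otimes> g0"] assms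
    by (simp add: m_assoc[symmetric])
  moreover have "NN (inv g0 \<otimes> g) \<le> psi (inv g0 \<otimes> g)" "NN (inv g \<otimes> g0) \<le> psi (inv g \<otimes> g0)"
    using assms NN_le_psi by simp_all
  ultimately show ?thesis by linarith
qed

end



lemma tg_facts:
  assumes "topological_group G T"
  shows "group G" "topspace T = carrier G"
    "continuous_map (prod_topology T T) T (\<lambda>(x, y). x \<otimes>\<^bsub>G\<^esub> y)"
    "continuous_map T T (\<lambda>x. inv\<^bsub>G\<^esub> x)"
  using assms unfolding topological_group_def by auto

lemma tg_left_mult_cont:
  assumes "topological_group G T" "a \<in> carrier G"
  shows "continuous_map T T (\<lambda>g. a \<otimes>\<^bsub>G\<^esub> g)"
proof -
  have "continuous_map T (prod_topology T T) (\<lambda>g. (a, g))"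
    using assms tg_facts[OF assms(1)] by (intro continuous_map_pairedI) auto
  from continuous_map_compose[OF this tg_facts(3)[OF assms(1)]] show ?thesis by (simp add: o_def)
qed

lemma tg_right_mult_cont:
  assumes "topological_group G T" "a \<in> carrier G"
  shows "continuous_map T T (\<lambda>g. g \<otimes>\<^bsub>G\<^esub> a)"
proof -
  have "continuous_map T (prod_topology T T) (\<lambda>g. (g, a))"
    using assms tg_facts[OF assms(1)] by (intro continuous_map_pairedI) auto
  from continuous_map_compose[OF this tg_facts(3)[OF assms(1)]] show ?thesis by (simp add: o_def)
qed

lemma tg_inv_mult_cont:
  assumes "topological_group G T"
  shows "continuous_map (prod_topology T T) T (\<lambda>z. inv\<^bsub>G\<^esub> (fst z) \<otimes>\<^bsub>G\<^esub> snd z)"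
proof -
  have "continuous_map (prod_topology T T) (prod_topology T T) (\<lambda>z. (inv\<^bsub>G\<^esub> (fst z), snd z))"
    apply (intro continuous_map_pairedI continuous_map_snd)
    using continuous_map_compose[OF continuous_map_fst tg_facts(4)[OF assms]] by (simp add: o_def)
  from continuous_map_compose[OF this tg_facts(3)[OF assms]] show ?thesis by (simp add: o_def)
qed

lemma tg_square_nbhd:
  assumes tg: "topological_group G T" and Oo: "openin T Oo" "\<one>\<^bsub>G\<^esub> \<in> Oo"
  shows "\<exists>V. openin T V \<and> \<one>\<^bsub>G\<^esub> \<in> V \<and> (\<forall>a\<in>V. \<forall>b\<in>V. a \<otimes>\<^bsub>G\<^esub> b \<in> Oo)"
proof -
  define P where "P = {z \<in> topspace (prod_topology T T). (\<lambda>(x, y). x \<otimes>\<^bsub>G\<^esub> y) z \<in> Oo}"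
  have Po: "openin (prod_topology T T) P"
    unfolding P_def by (rule openin_continuous_map_preimage[OF tg_facts(3)[OF tg] Oo(1)])
  have one: "\<one>\<^bsub>G\<^esub> \<in> carrier G" using group.is_monoid[OF tg_facts(1)[OF tg]] by (rule monoid.one_closed)
  have oo: "\<one>\<^bsub>G\<^esub> \<otimes>\<^bsub>G\<^esub> \<one>\<^bsub>G\<^esub> = \<one>\<^bsub>G\<^esub>"
    using group.is_monoid[OF tg_facts(1)[OF tg]] one by (rule monoid.l_one)
  have "(\<one>\<^bsub>G\<^esub>, \<one>\<^bsub>G\<^esub>) \<in> P" unfolding P_def using one oo Oo(2) tg_facts(2)[OF tg]
    by (simp only: topspace_prod_topology mem_Collect_eq mem_Times_iff fst_conv snd_conv case_prod_conv)
  then have "\<exists>U V. openin T U \<and> openin T V \<and> \<one>\<^bsub>G\<^esub> \<in> U \<and> \<one>\<^bsub>G\<^esub> \<in> V \<and> U \<times> V \<subseteq> P"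
    using Po unfolding openin_prod_topology_alt by (elim allE impE) 
  then obtain U1 V1 where UV: "openin T U1" "openin T V1" "\<one>\<^bsub>G\<^esub> \<in> U1" "\<one>\<^bsub>G\<^esub> \<in> V1" "U1 \<times> V1 \<subseteq> P"
    by blast
  have "\<forall>a\<in>U1 \<inter> V1. \<forall>b\<in>U1 \<inter> V1. a \<otimes>\<^bsub>G\<^esub> b \<in> Oo"
  proof (intro ballI)
    fix a b assume "a \<in> U1 \<inter> V1" "b \<in> U1 \<inter> V1"
    then have "(a, b) \<in> P" using UV(5) by blast
    then show "a \<otimes>\<^bsub>G\<^esub> b \<in> Oo" unfolding P_def by simp
  qed
  moreover have "openin T (U1 \<inter> V1)" using UV(1,2) by (rule openin_Int)
  ultimately show ?thesis using UV(3,4) by blast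
qed

lemma tg_cube_nbhd:
  assumes tg: "topological_group G T" and Oo: "openin T Oo" "\<one>\<^bsub>G\<^esub> \<in> Oo"
  shows "\<exists>V. openin T V \<and> \<one>\<^bsub>G\<^esub> \<in> V \<and> (\<forall>a\<in>V. \<forall>b\<in>V. \<forall>c\<in>V. a \<otimes>\<^bsub>G\<^esub> b \<otimes>\<^bsub>G\<^esub> c \<in> Oo)"
proof -
  obtain V1 where V1: "openin T V1" "\<one>\<^bsub>G\<^esub> \<in> V1" "\<forall>a\<in>V1. \<forall>b\<in>V1. a \<otimes>\<^bsub>G\<^esub> b \<in> Oo"
    using tg_square_nbhd[OF tg Oo] by blast
  obtain V2 where V2: "openin T V2" "\<one>\<^bsub>G\<^esub> \<in> V2" "\<forall>a\<in>V2. \<forall>b\<in>V2. a \<otimes>\<^bsub>G\<^esub> b \<in> V1"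
    using tg_square_nbhd[OF tg V1(1,2)] by blast
  have "\<forall>a\<in>V1 \<inter> V2. \<forall>b\<in>V1 \<inter> V2. \<forall>c\<in>V1 \<inter> V2. a \<otimes>\<^bsub>G\<^esub> b \<otimes>\<^bsub>G\<^esub> c \<in> Oo"
  proof (intro ballI)
    fix a b c assume "a \<in> V1 \<inter> V2" "b \<in> V1 \<inter> V2" "c \<in> V1 \<inter> V2"
    then have "a \<otimes>\<^bsub>G\<^esub> b \<in> V1" "c \<in> V1" using V2(3) by blast+
    then show "a \<otimes>\<^bsub>G\<^esub> b \<otimes>\<^bsub>G\<^esub> c \<in> Oo" using V1(3) by blast
  qed
  then show ?thesis using V1(1,2) V2(1,2) by (intro exI[of _ "V1 \<inter> V2"]) blast
qed

lemma (in bk_levels) NN_continuous: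
  assumes tg: "topological_group G T" and op: "\<And>n::nat. openin T (L (int n))"
  shows "continuous_map T euclideanreal NN"
proof -
  have tc: "topspace T = carrier G" using tg_facts[OF tg] by simp
  have "continuous_map T Met_TC.mtopology NN" unfolding Met_TC.continuous_map_to_metric
  proof (intro ballI allI impI)
    fix g0 and e :: real assume g0: "g0 \<in> topspace T" and e: "e > 0"
    then have g0c: "g0 \<in> carrier G" using tc by simp
    obtain n :: nat where n: "1 / e < 2 ^ n" using real_arch_pow[of 2 "1/e"] by auto
    have n2: "inverse (2 ^ n) < e" using n e by (simp add: field_simps)
    define Oo where "Oo = {g \<in> topspace T. inv g0 \<otimes> g \<in> L (int n)} \<inter> {g \<in> topspace T. inv g \<otimes> g0 \<in> L (int n)}"
    have c1: "continuous_map T T (\<lambda>g. inv g0 \<otimes> g)" using tg_left_mult_cont[OF tg] g0c by simp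
    have c2: "continuous_map T T (\<lambda>g. inv g \<otimes> g0)"
      using continuous_map_compose[OF tg_facts(4)[OF tg] tg_right_mult_cont[OF tg g0c]] by (simp add: o_def)
    have "openin T Oo" unfolding Oo_def
      by (intro openin_Int openin_continuous_map_preimage[OF c1 op] openin_continuous_map_preimage[OF c2 op])
    moreover have "g0 \<in> Oo" unfolding Oo_def using g0 g0c L_one by simp
    moreover have "\<forall>g\<in>Oo. NN g \<in> Met_TC.mball (NN g0) e"
    proof
      fix g assume g: "g \<in> Oo"
      then have gc: "g \<in> carrier G" unfolding Oo_def using tc by auto
      have "psi (inv g0 \<otimes> g) \<le> 2 powr (- real_of_int (int n))"
        using g gc g0c psi_le_iff[of "inv g0 \<otimes> g" "int n"] unfolding Oo_def by simp
      moreover have "psi (inv g \<otimes> g0) \<le> 2 powr (- real_of_int (int n))"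
        using g gc g0c psi_le_iff[of "inv g \<otimes> g0" "int n"] unfolding Oo_def by simp
      moreover have "(2::real) powr (- real_of_int (int n)) = inverse (2 ^ n)"
        by (simp add: powr_minus powr_realpow)
      ultimately have "\<bar>NN g - NN g0\<bar> < e" using NN_cont[OF g0c gc] n2 by linarith
      then show "NN g \<in> Met_TC.mball (NN g0) e" by (simp add: dist_real_def abs_minus_commute)
    qed
    ultimately show "\<exists>U. openin T U \<and> g0 \<in> U \<and> (\<forall>y\<in>U. NN y \<in> Met_TC.mball (NN g0) e)" by blast
  qed
  then show ?thesis by simp
qed

lemma (in bk_levels) dd_continuous:
  assumes tg: "topological_group G T" and op: "\<And>n::nat. openin T (L (int n))"
  shows "continuous_map (prod_topology T T) euclideanreal (\<lambda>(x, y). dd x y)"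
proof -
  have tc: "topspace T = carrier G" using tg_facts[OF tg] by simp
  have F: "continuous_map (prod_topology T T) euclideanreal (\<lambda>z. NN (inv (fst z) \<otimes> snd z))"
    using continuous_map_compose[OF tg_inv_mult_cont[OF tg] NN_continuous[OF tg op]] by (simp add: o_def)
  have sw: "continuous_map (prod_topology T T) (prod_topology T T) (\<lambda>z. (snd z, fst z))"
    by (intro continuous_map_pairedI continuous_map_snd continuous_map_fst)
  have F2: "continuous_map (prod_topology T T) euclideanreal (\<lambda>z. NN (inv (snd z) \<otimes> fst z))"
    using continuous_map_compose[OF sw F] by (simp add: o_def)
  have "continuous_map (prod_topology T T) euclideanreal (\<lambda>z. NN (inv (fst z) \<otimes> snd z) + NN (inv (snd z) \<otimes> fst z))"
    by (rule continuous_map_add[OF F F2])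
  then show ?thesis
    by (rule continuous_map_eq) (auto simp: dd_def tc)
qed



lemma (in group) d_triple:
  assumes dM: "Metric_space (carrier G) d"
    and dinv: "\<forall>g\<in>carrier G. \<forall>x\<in>carrier G. \<forall>y\<in>carrier G. d (g \<otimes> x) (g \<otimes> y) = d x y"
    and a: "a \<in> carrier G" and b: "b \<in> carrier G" and c: "c \<in> carrier G"
  shows "d \<one> (a \<otimes> b \<otimes> c) \<le> d \<one> a + d \<one> b + d \<one> c"
proof -
  have "d \<one> (a \<otimes> b \<otimes> c) \<le> d \<one> a + d a (a \<otimes> b \<otimes> c)"
    using Metric_space.triangle[OF dM] a b c by simp
  also have "d a (a \<otimes> b \<otimes> c) \<le> d a (a \<otimes> b) + d (a \<otimes> b) (a \<otimes> b \<otimes> c)"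
    using Metric_space.triangle[OF dM] a b c by simp
  also have "d a (a \<otimes> b) = d \<one> b" using dinv a b by (metis one_closed r_one)
  also have "d (a \<otimes> b) (a \<otimes> b \<otimes> c) = d \<one> c" using dinv a b c by (metis m_closed one_closed r_one)
  finally show ?thesis by simp
qed

lemma (in group) main_aux:
  assumes tg: "topological_group G T"
    and Ms: "Metric_space M m" and Teq: "T = Metric_space.mtopology M m"
    and U: "openin T U" "\<one> \<in> U" "strongly_bounded G U"
    and cb: "coarsely_bounded G T A"
    and lim: "left_invariant_metric G d"
  shows "finite_diameter d A"
proof -
  have tc: "topspace T = carrier G" using tg_facts[OF tg] by simp
  have M_eq: "M = carrier G" using Teq tc Metric_space.topspace_mtopology[OF Ms] by simp
  have mball_open: "\<And>x r. openin T (Metric_space.mball M m x r)"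
    using Teq Metric_space.openin_mball[OF Ms] by simp
  have dM: "Metric_space (carrier G) d" and dinv: "\<forall>g\<in>carrier G. \<forall>x\<in>carrier G. \<forall>y\<in>carrier G. d (g \<otimes> x) (g \<otimes> y) = d x y"
    using lim unfolding left_invariant_metric_def by auto
  have Usub: "U \<subseteq> carrier G" using U(1) tc openin_subset by blast
  obtain B where B: "\<forall>x\<in>U. \<forall>y\<in>U. d x y \<le> B"
    using U(3) lim unfolding strongly_bounded_def finite_diameter_def by blast
  define R where "R = 3 * (max B 0 + 1)"
  have R3: "R \<ge> 3" unfolding R_def by simp
  have d1U: "\<And>u. u \<in> U \<Longrightarrow> d \<one> u \<le> R / 3" using B U(2) unfolding R_def by force
  define W where "W k = {g \<in> carrier G. d \<one> g \<le> R * 3 ^ k}" for k :: nat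
  define P where "P n Oo V \<longleftrightarrow> openin T V \<and> \<one> \<in> V \<and> V \<subseteq> Metric_space.mball M m \<one> (1 / real (Suc n))
       \<and> (\<forall>a\<in>V. \<forall>b\<in>V. \<forall>c\<in>V. a \<otimes> b \<otimes> c \<in> Oo)" for n Oo V
  have ex: "\<exists>V. P n Oo V" if Oo: "openin T Oo" "\<one> \<in> Oo" for n Oo
  proof -
    define O2 where "O2 = Oo \<inter> Metric_space.mball M m \<one> (1 / real (Suc n))"
    have O2o: "openin T O2" unfolding O2_def using Oo(1) mball_open by (rule openin_Int)
    have "\<one> \<in> Metric_space.mball M m \<one> (1 / real (Suc n))"
      using M_eq Metric_space.centre_in_mball_iff[OF Ms] by simp
    then have O21: "\<one> \<in> O2" unfolding O2_def using Oo(2) by simp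
    obtain V where V: "openin T V" "\<one> \<in> V" "\<forall>a\<in>V. \<forall>b\<in>V. \<forall>c\<in>V. a \<otimes> b \<otimes> c \<in> O2"
      using tg_cube_nbhd[OF tg O2o O21] by blast
    have VO: "V \<subseteq> O2"
    proof
      fix a assume a: "a \<in> V"
      then have "a \<in> carrier G" using V(1) tc openin_subset by blast
      then have "a = a \<otimes> \<one> \<otimes> \<one>" by simp
      moreover have "a \<otimes> \<one> \<otimes> \<one> \<in> O2" using V(3) a V(2) by blast
      ultimately show "a \<in> O2" by simp
    qed
    have "P n Oo V" unfolding P_def
    proof (intro conjI)
      show "openin T V" "\<one> \<in> V" by (fact V(1), fact V(2))
      show "V \<subseteq> Metric_space.mball M m \<one> (1 / real (Suc n))" using VO unfolding O2_def by blast
      show "\<forall>a\<in>V. \<forall>b\<in>V. \<forall>c\<in>V. a \<otimes> b \<otimes> c \<in> Oo" using V(3) unfolding O2_def by blast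
    qed
    then show ?thesis by blast
  qed
  define F where "F n Oo = (SOME V. P n Oo V)" for n Oo
  have F: "P n Oo (F n Oo)" if "openin T Oo" "\<one> \<in> Oo" for n Oo
    unfolding F_def using ex[OF that] by (rule someI_ex)
  define V where "V = rec_nat U (\<lambda>n Vn. F n Vn)"
  have V0: "V 0 = U" and VS: "\<And>n. V (Suc n) = F n (V n)" unfolding V_def by simp_all
  have Vo: "openin T (V n) \<and> \<one> \<in> V n" for n
  proof (induction n)
    case 0 then show ?case using V0 U by simp
  next
    case (Suc n) then show ?case using F[of "V n" n] VS[of n] unfolding P_def by simp
  qed
  have VP: "P n (V n) (V (Suc n))" for n using F[of "V n" n] Vo[of n] VS[of n] by simp
  have Vsub: "V n \<subseteq> carrier G" for n using Vo[of n] tc openin_subset by blast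
  define L where "L n = (if 0 \<le> n then V (nat n) else W (nat (- n - 1)))" for n :: int
  have bkl: "bk_levels G L"
  proof (rule bk_levels.intro)
    show "group G" by (rule group_axioms)
    show "bk_levels_axioms G L"
    proof (rule bk_levels_axioms.intro)
      fix n show "L n \<subseteq> carrier G" unfolding L_def W_def using Vsub by auto
    next
      fix n
      have "d \<one> \<one> = 0" using Metric_space.zero[OF dM] by simp
      moreover have "0 \<le> R * 3 ^ nat (- n - 1)" using R3 by simp
      ultimately have "\<one> \<in> W (nat (- n - 1))" unfolding W_def by simp
      then show "\<one> \<in> L n" unfolding L_def using Vo[of "nat n"] by simp
    next
      fix a b c n assume abc: "a \<in> L (n+1)" "b \<in> L (n+1)" "c \<in> L (n+1)"
      show "a \<otimes> b \<otimes> c \<in> L n"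
      proof (cases "0 \<le> n")
        case True
        have Ln1: "L (n+1) = V (Suc (nat n))" using True unfolding L_def
          by (simp add: Suc_nat_eq_nat_zadd1 add.commute)
        have Ln: "L n = V (nat n)" using True unfolding L_def by simp
        have cube: "\<forall>a\<in>V (Suc (nat n)). \<forall>b\<in>V (Suc (nat n)). \<forall>c\<in>V (Suc (nat n)). a \<otimes> b \<otimes> c \<in> V (nat n)"
          using VP[of "nat n"] unfolding P_def by (elim conjE)
        have "a \<in> V (Suc (nat n))" "b \<in> V (Suc (nat n))" "c \<in> V (Suc (nat n))" using abc unfolding Ln1 by auto
        then have "a \<otimes> b \<otimes> c \<in> V (nat n)" using cube by blast
        then show ?thesis unfolding Ln .
      next
        case False
        show ?thesis
        proof (cases "n = -1")
          case True
          have Ln1: "L (n+1) = U" using True V0 unfolding L_def by simp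
          have Ln: "L n = W 0" using True unfolding L_def by simp
          have abcU: "a \<in> U" "b \<in> U" "c \<in> U" using abc unfolding Ln1 by auto
          then have abcC: "a \<in> carrier G" "b \<in> carrier G" "c \<in> carrier G" using Usub by auto
          have "d \<one> (a \<otimes> b \<otimes> c) \<le> d \<one> a + d \<one> b + d \<one> c" by (rule d_triple[OF dM dinv abcC])
          moreover have "d \<one> a \<le> R / 3" "d \<one> b \<le> R / 3" "d \<one> c \<le> R / 3" using d1U abcU by auto
          ultimately have "d \<one> (a \<otimes> b \<otimes> c) \<le> R * 3 ^ 0" by simp
          moreover have "a \<otimes> b \<otimes> c \<in> carrier G" using abcC by simp
          ultimately show ?thesis unfolding Ln W_def by simp
        next
          case False2: False
          define k where "k = nat (- n - 2)"
          have e: "nat (- (n + 1) - 1) = k" unfolding k_def by (intro arg_cong[where f=nat]) simp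
          have Ln1: "L (n+1) = W k" using False False2 e unfolding L_def by simp
          have Ln0: "L n = W (nat (- n - 1))" unfolding L_def using False by (rule if_not_P)
          have e2: "nat (- n - 1) = Suc k" unfolding k_def using False False2 by (simp add: nat_eq_iff)
          have Ln: "L n = W (Suc k)" unfolding Ln0 e2 by (rule refl)
          have abcW: "a \<in> W k" "b \<in> W k" "c \<in> W k" using abc unfolding Ln1 by auto
          then have abcC: "a \<in> carrier G" "b \<in> carrier G" "c \<in> carrier G" unfolding W_def by auto
          have "d \<one> (a \<otimes> b \<otimes> c) \<le> d \<one> a + d \<one> b + d \<one> c" by (rule d_triple[OF dM dinv abcC])
          moreover have "d \<one> a \<le> R * 3 ^ k" "d \<one> b \<le> R * 3 ^ k" "d \<one> c \<le> R * 3 ^ k"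
            using abcW unfolding W_def by auto
          ultimately have "d \<one> (a \<otimes> b \<otimes> c) \<le> R * 3 ^ Suc k" by simp
          moreover have "a \<otimes> b \<otimes> c \<in> carrier G" using abcC by simp
          ultimately show ?thesis unfolding Ln W_def by simp
        qed
      qed
    next
      fix g assume g: "g \<in> carrier G"
      obtain k :: nat where k: "d \<one> g < 3 ^ k" using real_arch_pow[of 3 "d \<one> g"] by auto
      have "(3::real) ^ k \<le> R * 3 ^ k" using R3 by simp
      then have "d \<one> g \<le> R * 3 ^ k" using k by linarith
      then have "g \<in> W k" unfolding W_def using g by simp
      moreover have "nat (- (- int k - 1) - 1) = k" by simp
      ultimately have "g \<in> L (- int k - 1)" unfolding L_def by simp
      then show "\<exists>n. g \<in> L n" by blast
    next
      fix g assume g: "g \<in> carrier G" and all: "\<forall>n. g \<in> L n"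
      have lt: "m \<one> g < 1 / real (Suc n)" for n
      proof -
        have "g \<in> L (int (Suc n))" using all by blast
        then have "g \<in> V (nat (int (Suc n)))" unfolding L_def by (simp only: of_nat_0_le_iff if_True)
        then have "g \<in> V (Suc n)" unfolding nat_int .
        then show ?thesis using VP[of n] unfolding P_def using Metric_space.in_mball[OF Ms] by blast
      qed
      have "m \<one> g = 0"
      proof (rule ccontr)
        assume "m \<one> g \<noteq> 0"
        then have "m \<one> g > 0" using Metric_space.nonneg[OF Ms, of \<one> g] by simp
        then obtain n where "inverse (real (Suc n)) < m \<one> g" using reals_Archimedean by blast
        then show False using lt[of n] by (simp add: field_simps)
      qed
      then show "g = \<one>" using Metric_space.zero[OF Ms, of \<one> g] M_eq g by simp
    qed
  qed
  interpret bk: bk_levels G L by (rule bkl)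
  have op: "openin T (L (int n))" for n unfolding L_def using Vo by simp
  have "continuous_left_invariant_metric G T bk.dd"
    unfolding continuous_left_invariant_metric_def left_invariant_metric_def
    using bk.dd_metric bk.dd_left_inv bk.dd_continuous[OF tg op] by blast
  then obtain B2 where B2: "\<forall>x\<in>A. \<forall>y\<in>A. bk.dd x y \<le> B2"
    using cb unfolding coarsely_bounded_def finite_diameter_def by blast
  have Asub: "A \<subseteq> carrier G" using cb unfolding coarsely_bounded_def by blast
  obtain k :: nat where k: "2 * B2 < 2 ^ k" using real_arch_pow[of 2 "2 * B2"] by auto
  have "\<forall>x\<in>A. \<forall>y\<in>A. d x y \<le> R * 3 ^ k"
  proof (intro ballI)
    fix x y assume xy: "x \<in> A" "y \<in> A"
    then have xc: "x \<in> carrier G" and yc: "y \<in> carrier G" using Asub by auto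
    have "bk.psi (inv x \<otimes> y) \<le> 2 * bk.dd x y" using bk.psi_le_dd[OF xc yc] .
    also have "\<dots> \<le> 2 powr (- real_of_int (- int k))"
    proof -
      have "bk.dd x y \<le> B2" using B2 xy by blast
      then have "2 * bk.dd x y \<le> 2 ^ k" using k by linarith
      then show ?thesis by (simp add: powr_realpow)
    qed
    finally have le: "bk.psi (inv x \<otimes> y) \<le> 2 powr (- real_of_int (- int k))" .
    have "inv x \<otimes> y \<in> carrier G" using xc yc by simp
    then have "inv x \<otimes> y \<in> L (- int k)" using bk.psi_le_iff[of "inv x \<otimes> y" "- int k"] le by blast
    then have "inv x \<otimes> y \<in> L (- int k - 1)" using bk.L_mono[of "- int k - 1" "- int k"] by auto
    moreover have "nat (- (- int k - 1) - 1) = k" by simp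
    ultimately have "inv x \<otimes> y \<in> W k" unfolding L_def by simp
    moreover have "d x y = d \<one> (inv x \<otimes> y)" using dinv xc yc by (metis inv_closed l_inv)
    ultimately show "d x y \<le> R * 3 ^ k" unfolding W_def by simp
  qed
  then show ?thesis unfolding finite_diameter_def by blast
qed


theorem proposition2p12:
  fixes G :: "('a, 'b) monoid_scheme" and T :: "'a topology"
  assumes "polish_group G T"
    and "locally_strongly_bounded G T"
  shows "\<forall>A. coarsely_bounded G T A \<longrightarrow> strongly_bounded G A"
proof -
  have tg: "topological_group G T" using assms(1) unfolding polish_group_def by blast
  have grp: "group G" using tg unfolding topological_group_def by blast
  have "metrizable_space T" using assms(1) completely_metrizable_imp_metrizable_space
    unfolding polish_group_def by blast
  then obtain M m where Ms: "Metric_space M m" and Teq: "T = Metric_space.mtopology M m"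
    unfolding metrizable_space_def by blast
  obtain U where U: "openin T U" "\<one>\<^bsub>G\<^esub> \<in> U" "strongly_bounded G U"
    using assms(2) unfolding locally_strongly_bounded_def by blast
  show ?thesis
  proof (intro allI impI)
    fix A assume cb: "coarsely_bounded G T A"
    show "strongly_bounded G A" unfolding strongly_bounded_def
    proof (intro conjI allI impI)
      show "A \<subseteq> carrier G" using cb unfolding coarsely_bounded_def by blast
    next
      fix d assume lim: "left_invariant_metric G d"
      show "finite_diameter d A" by (rule group.main_aux[OF grp tg Ms Teq U cb lim])
    qed
  qed
qed

end
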